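(* Let $m\ge2$ and let $\mathbb{A}=(a_{i_1i_2\ldots i_m})$ be a nonnegative strongly primitive tensor of order $m$ and dimension $n$. Then for every $\alpha\in[n]^{m-1}$ there exists $i\in[n]$ such that $a_{i\alpha}>0$.
   Context: General product of dimension-$n$ tensors: for $\mathbb{A}$ of order $m\ge2$ and $\mathbb{B}$ of order $k\ge1$, $(\mathbb{A}\mathbb{B})_{i\alpha_1\ldots\alpha_{m-1}}=\sum_{i_2,\ldots,i_m=1}^n a_{ii_2\ldots i_m}b_{i_2\alpha_1}\cdots b_{i_m\alpha_{m-1}}$ ($i\in[n]$, $\alpha_l\in[n]^{k-1}$), a tensor of order $(m-1)(k-1)+1$; it is associative and $\mathbb{A}^k$ denotes the $k$-fold power (of order $(m-1)^k+1$). A nonnegative tensor $\mathbb{A}$ is strongly primitive if there is a positive integer $k$ such that all entries of $\mathbb{A}^k$ are positive. *)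

theory Defs
  imports Complex_Main
begin

text \<open>A tensor of order m and dimension n is a function on index lists;
  only lists of length m with entries in {..<n} (0-based version of [n]) matter.\<close>

type_synonym tensor = "nat list \<Rightarrow> real"

definition idx_lists :: "nat \<Rightarrow> nat \<Rightarrow> nat list set" where
  "idx_lists n l = {xs. length xs = l \<and> set xs \<subseteq> {..<n}}"

text \<open>General product of A (order m) and B (order k), dimension n:
  (AB)(i, alpha_1, ..., alpha_{m-1}) =
    sum over i_2..i_m of a(i,i_2..i_m) * prod_l b(i_{l+1}, alpha_l),
  where the index list after i is split into consecutive blocks alpha_l of length k-1.\<close>

definition tprod :: "nat \<Rightarrow> nat \<Rightarrow> nat \<Rightarrow> tensor \<Rightarrow> tensor \<Rightarrow> tensor" where
  "tprod n m k A B = (\<lambda>idx.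
     \<Sum>js\<in>idx_lists n (m - 1).
        A (hd idx # js) *
        (\<Prod>l<m - 1. B (js ! l # take (k - 1) (drop (1 + l * (k - 1)) idx))))"

fun tpow :: "nat \<Rightarrow> nat \<Rightarrow> tensor \<Rightarrow> nat \<Rightarrow> tensor" where
  "tpow n m A 0 = A"
| "tpow n m A (Suc 0) = A"
| "tpow n m A (Suc (Suc k)) =
     tprod n ((m - 1) ^ Suc k + 1) m (tpow n m A (Suc k)) A"

definition nonneg_tensor :: "nat \<Rightarrow> nat \<Rightarrow> tensor \<Rightarrow> bool" where
  "nonneg_tensor n m A \<longleftrightarrow> (\<forall>idx\<in>idx_lists n m. 0 \<le> A idx)"

definition strongly_primitive :: "nat \<Rightarrow> nat \<Rightarrow> tensor \<Rightarrow> bool" where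
  "strongly_primitive n m A \<longleftrightarrow>
     (\<exists>k>0. \<forall>idx\<in>idx_lists n ((m - 1) ^ k + 1). 0 < tpow n m A k idx)"

end

theory Submission
  imports Defs
begin

theorem proposition4p14:
  fixes n m :: nat and A :: tensor
  assumes "m \<ge> 2"
    and "nonneg_tensor n m A"
    and "strongly_primitive n m A"
  shows "\<forall>\<alpha>\<in>idx_lists n (m - 1). \<exists>i<n. 0 < A (i # \<alpha>)"
proof (rule ballI, rule ccontr)
  fix \<alpha> assume a: "\<alpha> \<in> idx_lists n (m - 1)" and na: "\<not> (\<exists>i<n. 0 < A (i # \<alpha>))"
  have la: "length \<alpha> = m - 1" and sa: "set \<alpha> \<subseteq> {..<n}" using a by (auto simp: idx_lists_def)
  have np: "n > 0" using la sa assms(1)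
  proof -
    have "\<alpha> \<noteq> []" using la assms(1) by auto
    hence "hd \<alpha> \<in> set \<alpha>" by simp
    thus ?thesis using sa by auto
  qed
  have z: "A (i # \<alpha>) = 0" if "i < n" for i
  proof -
    have "i # \<alpha> \<in> idx_lists n m" using that la sa assms(1) by (auto simp: idx_lists_def)
    hence "0 \<le> A (i # \<alpha>)" using assms(2) by (auto simp: nonneg_tensor_def)
    thus ?thesis using na that by force
  qed
  obtain k where k: "k > 0" and pos: "\<forall>idx\<in>idx_lists n ((m - 1) ^ k + 1). 0 < tpow n m A k idx"
    using assms(3) by (auto simp: strongly_primitive_def)
  have mp: "m - 1 \<ge> 1" using assms(1) by simp
  have pk: "(m - 1) ^ k \<ge> m - 1" using mp k
  proof -
    have "(m - 1) ^ 1 \<le> (m - 1) ^ k" using mp k by (intro power_increasing) auto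
    thus ?thesis by simp
  qed
  define idx where "idx = 0 # \<alpha> @ replicate ((m - 1) ^ k - (m - 1)) 0"
  have idxin: "idx \<in> idx_lists n ((m - 1) ^ k + 1)" using la sa np pk
    by (auto simp: idx_def idx_lists_def)
  have "tpow n m A k idx = 0"
  proof (cases k)
    case 0 thus ?thesis using k by simp
  next
    case (Suc k')
    show ?thesis
    proof (cases k')
      case 0
      hence "(m - 1) ^ k - (m - 1) = 0" using Suc by simp
      thus ?thesis using Suc 0 z np by (simp add: idx_def)
    next
      case (Suc k'')
      have kk: "k = Suc (Suc k'')" using Suc \<open>k = Suc k'\<close> by simp
      have pos2: "(m - 1) ^ Suc k'' \<ge> 1" using mp by simp
      have tk: "take (m - 1) (drop 1 idx) = \<alpha>" using la by (simp add: idx_def)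
      show ?thesis unfolding kk tpow.simps tprod_def
      proof (rule sum.neutral, rule ballI)
        fix js assume js: "js \<in> idx_lists n ((m - 1) ^ Suc k'' + 1 - 1)"
        have ljs: "length js = (m - 1) ^ Suc k''" and sjs: "set js \<subseteq> {..<n}"
          using js by (auto simp: idx_lists_def)
        have "js ! 0 < n" using ljs sjs pos2
        proof -
          have "js ! 0 \<in> set js" using ljs pos2 assms(1) by (intro nth_mem) simp
          thus ?thesis using sjs by auto
        qed
        hence "A (js ! 0 # take (m - 1) (drop (1 + 0 * (m - 1)) idx)) = 0"
          using tk z by simp
        moreover have "(0::nat) \<in> {..<(m - 1) ^ Suc k'' + 1 - 1}" using pos2 assms(1) by (simp del: power_Suc)
        ultimately have "(\<Prod>l<(m - 1) ^ Suc k'' + 1 - 1.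
             A (js ! l # take (m - 1) (drop (1 + l * (m - 1)) idx))) = 0"
          by (intro prod_zero bexI[of _ 0]) simp_all
        thus "tpow n m A (Suc k'') (hd idx # js) *
             (\<Prod>l<(m - 1) ^ Suc k'' + 1 - 1.
                A (js ! l # take (m - 1) (drop (1 + l * (m - 1)) idx))) = 0" by simp
      qed
    qed
  qed
  with pos idxin show False by force
qed

end
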